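(* Suppose $F$ satisfies Assumption 1 and let $v\in[0,1]$ with $F(b^*_{v,F})>0$. Let $W_{v,F}(q)=U_{v,F}(F^{-1}(q))$ for $q\in[0,1]$ and $q^*_{v,F}=F(b^*_{v,F})$. Then for every $q\in[0,1]$, $$W_{v,F}(q^*_{v,F})-W_{v,F}(q)\ \ge\ \frac14\,(q^*_{v,F}-q)^2\,W_{v,F}(q^*_{v,F}).$$
   Context: Assumption 1: $F$ is a cumulative distribution function on $[0,1]$ which is continuously differentiable with density $f=F'$ and is strictly log-concave (equivalently $f/F$ is strictly decreasing on $(0,1)$); in particular $F$ is increasing and has an inverse $F^{-1}$. $U_{v,F}(b)=(v-b)F(b)$ and $b^*_{v,F}=\max\{\operatorname{argmax}_{b\in[0,1]}U_{v,F}(b)\}$. *)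

theory Defs
  imports "HOL-Analysis.Analysis"
begin

text \<open>Assumption 1: F is a CDF on [0,1] (F 0 = 0, F 1 = 1), continuously differentiable
  on [0,1] with density f = F', strictly increasing, and strictly log-concave,
  i.e. f/F strictly decreasing on (0,1).\<close>
definition assumption1 :: "(real \<Rightarrow> real) \<Rightarrow> (real \<Rightarrow> real) \<Rightarrow> bool" where
  "assumption1 F f \<longleftrightarrow>
     F 0 = 0 \<and> F 1 = 1 \<and>
     (\<forall>x\<in>{0..1}. (F has_real_derivative f x) (at x within {0..1})) \<and>
     continuous_on {0..1} f \<and>
     strict_mono_on {0..1} F \<and>
     (\<forall>x y. 0 < x \<longrightarrow> x < y \<longrightarrow> y < 1 \<longrightarrow> f y / F y < f x / F x)"

definition U :: "real \<Rightarrow> (real \<Rightarrow> real) \<Rightarrow> real \<Rightarrow> real" where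
  "U v F b = (v - b) * F b"

definition bstar :: "real \<Rightarrow> (real \<Rightarrow> real) \<Rightarrow> real" where
  "bstar v F = Sup {b \<in> {0..1}. \<forall>c\<in>{0..1}. U v F c \<le> U v F b}"

definition W :: "real \<Rightarrow> (real \<Rightarrow> real) \<Rightarrow> real \<Rightarrow> real" where
  "W v F q = U v F (inv_into {0..1} F q)"

definition qstar :: "real \<Rightarrow> (real \<Rightarrow> real) \<Rightarrow> real" where
  "qstar v F = F (bstar v F)"

end

theory Submission
  imports Defs
begin

lemma ln_ge1: assumes "(r::real) \<ge> 1" shows "ln r \<ge> 2*(r-1)/(r+1)"
proof -
  have "(\<lambda>x. ln x - 2*(x-1)/(x+1)) 1 \<le> (\<lambda>x. ln x - 2*(x-1)/(x+1)) r"
  proof (rule DERIV_nonneg_imp_nondecreasing[OF assms])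
    fix x :: real assume x: "1 \<le> x" "x \<le> r"
    have "DERIV (\<lambda>x. ln x - 2*(x-1)/(x+1)) x :> 1/x - (2*(x+1) - 2*(x-1))/(x+1)^2"
      using x by (auto intro!: derivative_eq_intros simp: power2_eq_square)
    moreover have "1/x - (2*(x+1) - 2*(x-1))/(x+1)^2 = (x-1)^2/(x*(x+1)^2)"
    proof -
      have x0: "x > 0" "x + 1 > 0" using x by auto
      have "(2*(x+1) - 2*(x-1)) = 4" by simp
      moreover have "1/x - 4/(x+1)^2 = ((x+1)^2 - 4*x)/(x*(x+1)^2)"
        using x0 by (simp add: diff_divide_distrib)
      moreover have "(x+1)^2 - 4*x = (x-1)^2" by (simp add: power2_eq_square algebra_simps)
      ultimately show ?thesis by simp
    qed
    moreover have "(x-1)^2/(x*(x+1)^2) \<ge> 0" using x by simp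
    ultimately show "\<exists>y. DERIV (\<lambda>x. ln x - 2*(x-1)/(x+1)) x :> y \<and> y \<ge> 0" by metis
  qed
  thus ?thesis by simp
qed

lemma ln_le1: assumes "(x::real) \<ge> 1" shows "ln x \<le> (x - 1/x)/2"
proof -
  have "(\<lambda>x. (x - 1/x)/2 - ln x) 1 \<le> (\<lambda>x. (x - 1/x)/2 - ln x) x"
  proof (rule DERIV_nonneg_imp_nondecreasing[OF assms])
    fix y :: real assume y: "1 \<le> y" "y \<le> x"
    have "DERIV (\<lambda>x. (x - 1/x)/2 - ln x) y :> (1 + 1/y^2)/2 - 1/y"
      using y by (auto intro!: derivative_eq_intros simp: power2_eq_square field_simps)
    moreover have "(1 + 1/y^2)/2 - 1/y = (y-1)^2/(2*y^2)"
      using y by (simp add: field_simps power2_eq_square)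
    moreover have "(y-1)^2/(2*y^2) \<ge> 0" using y by simp
    ultimately show "\<exists>z. DERIV (\<lambda>x. (x - 1/x)/2 - ln x) y :> z \<and> z \<ge> 0" by metis
  qed
  thus ?thesis by simp
qed

lemma phi_bound:
  fixes r p :: real assumes "r > 0" "0 < p" "p \<le> 1" "r * p \<le> 1"
  shows "1 - r + r * ln r \<ge> 1/4 * p^2 * (1-r)^2"
proof (cases "r \<ge> 1")
  case True
  have "r * ln r \<ge> r * (2*(r-1)/(r+1))" using ln_ge1[OF True] True by (intro mult_left_mono) auto
  moreover have "1 - r + r*(2*(r-1)/(r+1)) = (r-1)^2/(r+1)" using True by (simp add: field_simps power2_eq_square)
  ultimately have "1 - r + r * ln r \<ge> (r-1)^2/(r+1)" by linarith
  moreover have "(r-1)^2/(r+1) \<ge> 1/4 * p^2 * (1-r)^2"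
  proof -
    have "p^2 * (r+1) \<le> 4" 
    proof -
      have "p*r \<le> 1" using assms by (simp add: mult.commute)
      have "p^2 * (r+1) = p * (p*r) + p*p" by (simp add: power2_eq_square algebra_simps)
      also have "\<dots> \<le> 1 + 1" using assms \<open>p*r\<le>1\<close> by (intro add_mono) (auto simp: mult_le_one)
      finally show ?thesis by simp
    qed
    hence "(p^2 * (r+1))/4 * (r-1)^2 \<le> 1 * (r-1)^2"
      by (intro mult_right_mono) auto
    hence "1/4 * p^2 * (1-r)^2 * (r+1) \<le> (r-1)^2"
      by (simp add: power2_commute[of 1 r] mult_ac)
    moreover have "r + 1 > 0" using True by simp
    ultimately show ?thesis by (simp add: pos_le_divide_eq)
  qed
  ultimately show ?thesis by linarith
next
  case False
  have "1 \<le> 1/r" using False assms by simp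
  hence "ln (1/r) \<le> (1/r - 1/(1/r))/2" by (rule ln_le1)
  hence "ln (1/r) \<le> (1/r - r)/2" by simp
  hence "r * ln (1/r) \<le> r * ((1/r - r)/2)" using assms by (intro mult_left_mono) auto
  moreover have "r * ((1/r - r)/2) = (1 - r^2)/2" using assms by (simp add: field_simps power2_eq_square)
  moreover have "ln (1/r) = - ln r" using assms by (simp add: ln_div)
  ultimately have "r * ln r \<ge> - (1 - r^2)/2" by simp
  moreover have "1 - r - (1 - r^2)/2 = (1-r)^2/2" by (simp add: power2_eq_square field_simps)
  ultimately have "1 - r + r * ln r \<ge> (1-r)^2/2" by linarith
  moreover have "1/4 * p^2 * (1-r)^2 \<le> (1-r)^2/2"
  proof -
    have "p^2 \<le> 1" using assms by (simp add: power_le_one)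
    hence "p^2 * (1-r)^2 \<le> 1 * (1-r)^2" by (intro mult_right_mono) auto
    moreover have "(1-r)^2 \<ge> 0" by simp
    ultimately show ?thesis by linarith
  qed
  ultimately show ?thesis by linarith
qed

theorem lemma5:
  fixes F f :: "real \<Rightarrow> real" and v q :: real
  assumes "assumption1 F f"
    and "v \<in> {0..1}"
    and "F (bstar v F) > 0"
    and "q \<in> {0..1}"
  shows "W v F (qstar v F) - W v F q \<ge> 1/4 * (qstar v F - q)^2 * W v F (qstar v F)"
proof -
  have F0: "F 0 = 0" and F1: "F 1 = 1"
    and der: "\<And>x. x \<in> {0..1} \<Longrightarrow> (F has_real_derivative f x) (at x within {0..1})"
    and smono: "strict_mono_on {0..1} F"
    and logc: "\<And>x y. 0 < x \<Longrightarrow> x < y \<Longrightarrow> y < 1 \<Longrightarrow> f y / F y < f x / F x"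
    using assms(1) unfolding assumption1_def by auto
  have contF: "continuous_on {0..1} F"
    unfolding continuous_on_eq_continuous_within using der DERIV_continuous by blast
  have derat: "(F has_real_derivative f x) (at x)" if "0 < x" "x < 1" for x
  proof -
    have "x \<in> interior {0..1::real}" using that by simp
    hence "at x within {0..1} = at x" by (rule at_within_interior)
    thus ?thesis using der[of x] that by simp
  qed
  have mono: "F x < F y" if "x \<in> {0..1}" "y \<in> {0..1}" "x < y" for x y
    using strict_mono_onD[OF smono that] .
  have monole: "F x \<le> F y" if "x \<in> {0..1}" "y \<in> {0..1}" "x \<le> y" for x y
    using mono[OF that(1,2)] that by (cases "x = y") auto
  have Frange: "F x \<in> {0..1}" if "x \<in> {0..1}" for x
    using monole[of 0 x] monole[of x 1] that F0 F1 by auto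
  have inj: "inj_on F {0..1}" using smono by (rule strict_mono_on_imp_inj_on)
  have surj: "y \<in> F ` {0..1}" if y: "y \<in> {0..1}" for y
  proof -
    obtain x where "0 \<le> x" "x \<le> 1" "F x = y"
      using IVT'[of F 0 y 1] y F0 F1 contF by auto
    thus ?thesis by force
  qed
  define Uf where "Uf = U v F"
  have Uf: "Uf b = (v - b) * F b" for b unfolding Uf_def U_def by simp
  have contU: "continuous_on {0..1} Uf"
    unfolding Uf_def U_def by (intro continuous_intros contF)
  obtain m where m: "m \<in> {0..1}" "\<And>y. y \<in> {0..1} \<Longrightarrow> Uf y \<le> Uf m"
    using continuous_attains_sup[OF compact_Icc _ contU] by auto
  define S where "S = {b \<in> {0..1}. \<forall>c\<in>{0..1}. U v F c \<le> U v F b}"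
  have S_eq: "S = {b \<in> {0..1}. (\<lambda>_. Uf m) b \<le> Uf b}"
    unfolding S_def Uf_def[symmetric] using m by (auto intro: order_trans[OF m(2)])
  have "closed S" unfolding S_eq
    by (intro continuous_on_closed_Collect_le continuous_intros contU)
  moreover have "S \<noteq> {}" using m unfolding S_eq by auto
  moreover have "bdd_above S" unfolding S_def by (rule bdd_aboveI[of _ 1]) auto
  ultimately have "Sup S \<in> S" by (simp add: closed_contains_Sup)
  hence bsS: "bstar v F \<in> S" unfolding bstar_def S_def by simp
  define bs where "bs = bstar v F"
  have bs01: "bs \<in> {0..1}" and bsmax: "\<And>c. c \<in> {0..1} \<Longrightarrow> Uf c \<le> Uf bs"
    using bsS unfolding S_def bs_def Uf_def by auto
  define qs where "qs = F bs"
  have qs_pos: "qs > 0" using assms(3) unfolding qs_def bs_def .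
  have qs1: "qs \<le> 1" using Frange[OF bs01] unfolding qs_def by simp
  have bs_pos: "bs > 0" using bs01 qs_pos F0 unfolding qs_def by (cases "bs = 0") auto
  have bs_lt1: "bs < 1"
  proof (rule ccontr)
    assume "\<not> bs < 1"
    hence bs1: "bs = 1" using bs01 by auto
    show False
    proof (cases "v < 1")
      case True
      have "Uf 0 \<le> Uf bs" by (rule bsmax) auto
      thus False using True bs1 F0 F1 by (simp add: Uf)
    next
      case False
      hence "v = 1" using assms(2) by auto
      have "Uf (1/2) \<le> Uf bs" by (rule bsmax) auto
      moreover have "F (1/2) > 0" using mono[of 0 "1/2"] F0 by auto
      ultimately show False using \<open>v = 1\<close> bs1 F1 by (simp add: Uf)
    qed
  qed
  have foc: "(v - bs) * f bs = F bs"
  proof -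
    have dU: "DERIV Uf bs :> (- 1) * F bs + (v - bs) * f bs"
      unfolding Uf_def U_def
      by (rule derivative_eq_intros refl derat[OF bs_pos bs_lt1])+ simp
    have "(- 1) * F bs + (v - bs) * f bs = 0"
    proof (rule DERIV_local_max[OF dU])
      show "0 < min bs (1 - bs)" using bs_pos bs_lt1 by simp
      show "\<forall>y. \<bar>bs - y\<bar> < min bs (1 - bs) \<longrightarrow> Uf y \<le> Uf bs"
      proof (intro allI impI)
        fix y assume "\<bar>bs - y\<bar> < min bs (1 - bs)"
        hence "y \<in> {0..1}" by (auto simp: abs_less_iff)
        thus "Uf y \<le> Uf bs" by (rule bsmax)
      qed
    qed
    thus ?thesis by simp
  qed
  have vbs: "v - bs > 0"
  proof -
    have "Uf 0 \<le> Uf bs" by (rule bsmax) auto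
    hence "0 \<le> (v - bs) * qs" using F0 by (simp add: Uf qs_def)
    hence "v - bs \<ge> 0" using qs_pos by (simp add: zero_le_mult_iff)
    moreover have "v - bs \<noteq> 0" using foc qs_pos unfolding qs_def by auto
    ultimately show ?thesis by simp
  qed
  define s where "s = f bs / F bs"
  have s_eq: "s = 1 / (v - bs)" unfolding s_def using foc vbs qs_pos unfolding qs_def
    by (simp add: field_simps)
  have tangent: "ln (F b) \<le> ln qs + s * (b - bs)" if b: "0 < b" "b \<le> 1" for b
  proof -
    define g where "g = (\<lambda>x. ln (F x))"
    have Fpos: "F x > 0" if "0 < x" "x \<le> 1" for x
      using mono[of 0 x] that F0 by auto
    have dg: "DERIV g x :> f x / F x" if "0 < x" "x < 1" for x
    proof -
      have "DERIV g x :> 1 / F x * f x" unfolding g_def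
        using derat[OF that] Fpos[of x] that by (auto intro!: derivative_eq_intros)
      thus ?thesis by simp
    qed
    have cg: "continuous_on {a..c} g" if "0 < a" "c \<le> 1" for a c
    proof -
      have "continuous_on {a..c} F" using contF by (rule continuous_on_subset) (use that in auto)
      moreover have "F x \<noteq> 0" if "x\<in>{a..c}" for x
        using Fpos[of x] that \<open>0 < a\<close> \<open>c \<le> 1\<close> by auto
      ultimately show ?thesis unfolding g_def by (intro continuous_on_ln) auto
    qed
    have diffg: "g differentiable (at x)" if "0 < x" "x < 1" for x
      using dg[OF that] real_differentiable_def by blast
    consider "b = bs" | "bs < b" | "b < bs" by linarith
    thus ?thesis
    proof cases
      case 1 thus ?thesis unfolding qs_def by simp
    next
      case 2
      obtain l z where z: "bs < z" "z < b" "DERIV g z :> l" "g b - g bs = (b - bs) * l"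
        using MVT[OF 2 cg[OF bs_pos b(2)]] diffg bs_pos b by force
      have "l = f z / F z" using DERIV_unique[OF z(3) dg] z bs_pos b by auto
      moreover have "f z / F z < s" unfolding s_def using logc[of bs z] z bs_pos b by auto
      ultimately have "(b - bs) * l \<le> (b - bs) * s" using 2 by (intro mult_left_mono) auto
      moreover have "s * (b - bs) = (b - bs) * s" by (rule mult.commute)
      ultimately show ?thesis using z(4) unfolding g_def qs_def by linarith
    next
      case 3
      obtain l z where z: "b < z" "z < bs" "DERIV g z :> l" "g bs - g b = (bs - b) * l"
        using MVT[OF 3 cg[OF b(1)]] diffg bs_lt1 b bs_lt1 by force
      have "l = f z / F z" using DERIV_unique[OF z(3) dg] z bs_lt1 b by auto
      moreover have "s < f z / F z" unfolding s_def using logc[of z bs] z bs_lt1 b by auto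
      ultimately have "(bs - b) * s \<le> (bs - b) * l" using 3 by (intro mult_left_mono) auto
      moreover have "s * (b - bs) = - ((bs - b) * s)" by (simp add: algebra_simps)
      ultimately show ?thesis using z(4) unfolding g_def qs_def by linarith
    qed
  qed
  have Wqs: "W v F qs = (v - bs) * qs"
  proof -
    have "inv_into {0..1} F qs = bs" unfolding qs_def using inj bs01 by (rule inv_into_f_f)
    thus ?thesis unfolding W_def U_def qs_def by simp
  qed
  define B where "B = inv_into {0..1} F q"
  have B01: "B \<in> {0..1}" unfolding B_def using surj[OF assms(4)] by (rule inv_into_into)
  have FB: "F B = q" unfolding B_def using surj[OF assms(4)] by (rule f_inv_into_f)
  have Wq: "W v F q = (v - B) * q" unfolding W_def U_def B_def[symmetric] using FB by simp
  have qsdef: "qstar v F = qs" unfolding qstar_def qs_def bs_def ..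
  have X0: "(v - bs) * qs > 0" using vbs qs_pos by simp
  show ?thesis
  proof (cases "q = 0")
    case True
    have "qs^2 \<le> 1" using qs_pos qs1 by (simp add: power_le_one)
    hence "1/4 * qs^2 * ((v - bs) * qs) \<le> 1 * ((v - bs) * qs)"
      using X0 by (intro mult_right_mono) auto
    thus ?thesis using True Wq qsdef Wqs by simp
  next
    case False
    hence qpos: "q > 0" using assms(4) by simp
    have Bpos: "B > 0" using B01 FB F0 qpos by (cases "B = 0") auto
    have "ln q \<le> ln qs + s * (B - bs)" using tangent[of B] Bpos B01 FB by simp
    define r where "r = q / qs"
    have rpos: "r > 0" unfolding r_def using qpos qs_pos by simp
    have qr: "q = r * qs" unfolding r_def using qs_pos by simp
    have "ln r = ln q - ln qs" unfolding r_def using qpos qs_pos by (simp add: ln_div)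
    hence "ln r \<le> (B - bs) / (v - bs)" using \<open>ln q \<le> ln qs + s * (B - bs)\<close> s_eq by simp
    hence "(v - bs) * ln r \<le> B - bs" using vbs by (simp add: pos_le_divide_eq mult.commute)
    hence "(v - B) * q \<le> (v - bs - (v - bs) * ln r) * q" using qpos by (intro mult_right_mono) auto
    also have "\<dots> = (v - bs) * qs * (r - r * ln r)" unfolding qr by (simp add: algebra_simps)
    finally have Wq_le: "W v F q \<le> (v - bs) * qs * (r - r * ln r)" using Wq by simp
    have "1 - r + r * ln r \<ge> 1/4 * qs^2 * (1-r)^2"
      by (rule phi_bound[OF rpos qs_pos qs1]) (use qr assms(4) in simp)
    hence "(v - bs) * qs * (1/4 * qs^2 * (1-r)^2) \<le> (v - bs) * qs * (1 - r + r * ln r)"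
      using X0 by (intro mult_left_mono) auto
    moreover have "(v - bs) * qs * (1/4 * qs^2 * (1-r)^2) = 1/4 * (qs - q)^2 * ((v - bs) * qs)"
      unfolding qr by (simp add: power2_eq_square field_simps)
    moreover have "(v - bs) * qs * (1 - r + r * ln r) = (v - bs) * qs - (v - bs) * qs * (r - r * ln r)"
      by (simp add: algebra_simps)
    ultimately have "(v - bs) * qs - W v F q \<ge> 1/4 * (qs - q)^2 * ((v - bs) * qs)"
      using Wq_le by linarith
    thus ?thesis using qsdef Wqs by simp
  qed
qed

end
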